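(* Let $1\le r\le s\le t$ and let $u=ABCd$, $v=A'B'C'd'$ be distinct vertices of $E3C(r,s,t)$ with $B=B'$, $C=C'$ and $d=d'$ (any $d\in\{0,1,2\}$). Then there exist $2r+2$ pairwise internally disjoint $u$–$v$ paths in $E3C(r,s,t)$, each of length at most $r+6$.
   Context: The exchanged 3-ary $n$-cube $E3C(r,s,t)$ ($r,s,t\ge1$, $n=r+s+t+1$): vertices are strings written $x=ABCd$ with $A\in\{0,1,2\}^r$, $B\in\{0,1,2\}^s$, $C\in\{0,1,2\}^t$, $d\in\{0,1,2\}$. Two distinct vertices $x=ABCd$, $y=A'B'C'd'$ are adjacent iff one of: (E0) $A=A',B=B',C=C'$ and $d\ne d'$; (E1) $d=d'=0$, $A=A'$, $B=B'$ and $C,C'$ differ in exactly one position; (E2) $d=d'=1$, $A=A'$, $C=C'$ and $B,B'$ differ in exactly one position; (E3) $d=d'=2$, $B=B'$, $C=C'$ and $A,A'$ differ in exactly one position. Paths are internally disjoint if they share no vertices other than their endpoints; length = number of edges. *)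

theory Defs
  imports Main
begin

type_synonym e3c_vertex = "nat list \<times> nat list \<times> nat list \<times> nat"

definition ternary :: "nat \<Rightarrow> nat list \<Rightarrow> bool" where
  "ternary k X \<longleftrightarrow> length X = k \<and> (\<forall>a\<in>set X. a < 3)"

definition e3c_vertices :: "nat \<Rightarrow> nat \<Rightarrow> nat \<Rightarrow> e3c_vertex set" where
  "e3c_vertices r s t = {(A,B,C,d). ternary r A \<and> ternary s B \<and> ternary t C \<and> d < 3}"

definition differ_one :: "nat list \<Rightarrow> nat list \<Rightarrow> bool" where
  "differ_one X Y \<longleftrightarrow> length X = length Y \<and> card {i. i < length X \<and> X ! i \<noteq> Y ! i} = 1"

definition e3c_adj :: "nat \<Rightarrow> nat \<Rightarrow> nat \<Rightarrow> e3c_vertex \<Rightarrow> e3c_vertex \<Rightarrow> bool" where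
  "e3c_adj r s t x y \<longleftrightarrow> x \<in> e3c_vertices r s t \<and> y \<in> e3c_vertices r s t \<and> x \<noteq> y \<and>
     (case x of (A,B,C,d) \<Rightarrow> case y of (A',B',C',d') \<Rightarrow>
        (A = A' \<and> B = B' \<and> C = C' \<and> d \<noteq> d')
      \<or> (d = 0 \<and> d' = 0 \<and> A = A' \<and> B = B' \<and> differ_one C C')
      \<or> (d = 1 \<and> d' = 1 \<and> A = A' \<and> C = C' \<and> differ_one B B')
      \<or> (d = 2 \<and> d' = 2 \<and> B = B' \<and> C = C' \<and> differ_one A A'))"

definition e3c_path :: "nat \<Rightarrow> nat \<Rightarrow> nat \<Rightarrow> e3c_vertex \<Rightarrow> e3c_vertex \<Rightarrow> e3c_vertex list \<Rightarrow> bool" where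
  "e3c_path r s t u v p \<longleftrightarrow> p \<noteq> [] \<and> hd p = u \<and> last p = v \<and> distinct p \<and>
     set p \<subseteq> e3c_vertices r s t \<and>
     (\<forall>i. Suc i < length p \<longrightarrow> e3c_adj r s t (p ! i) (p ! Suc i))"

definition path_len :: "'a list \<Rightarrow> nat" where
  "path_len p = length p - 1"

end

theory Submission
  imports Defs
begin


definition dat :: "nat list \<Rightarrow> nat list \<Rightarrow> nat \<Rightarrow> bool" where
  "dat X Y p \<longleftrightarrow> length X = length Y \<and> p < length X \<and> X!p \<noteq> Y!p \<and> (\<forall>i<length X. i \<noteq> p \<longrightarrow> X!i = Y!i)"

lemma dat_differ_one: "dat X Y p \<Longrightarrow> differ_one X Y"
proof -
  assume a: "dat X Y p"
  have "{i. i < length X \<and> X ! i \<noteq> Y ! i} = {p}" using a unfolding dat_def by auto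
  thus ?thesis using a unfolding differ_one_def dat_def by simp
qed

lemma differ_one_neq: "differ_one X Y \<Longrightarrow> X \<noteq> Y"
  unfolding differ_one_def by auto

lemma dat_upd: "dat X Y p \<Longrightarrow> j \<noteq> p \<Longrightarrow> dat (X[j:=x]) (Y[j:=x]) p"
  unfolding dat_def by (metis length_list_update nth_list_update_neq nth_list_update)

lemma dat_single: "p < length X \<Longrightarrow> x \<noteq> X!p \<Longrightarrow> dat X (X[p:=x]) p"
  unfolding dat_def by (auto simp: nth_list_update)

lemma upd_inj: "X[j:=x] = Y[j:=x] \<Longrightarrow> X!j = Y!j \<Longrightarrow> X = Y"
  by (metis list_update_id list_update_overwrite)

lemma ternary_upd: "ternary k X \<Longrightarrow> x < 3 \<Longrightarrow> ternary k (X[j:=x])"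
  unfolding ternary_def by (auto dest: set_update_subset_insert[THEN subsetD])

definition mix :: "nat list \<Rightarrow> nat list \<Rightarrow> nat set \<Rightarrow> nat list" where
  "mix X Y S = map (\<lambda>i. if i \<in> S then Y!i else X!i) [0..<length X]"

lemma length_mix[simp]: "length (mix X Y S) = length X"
  unfolding mix_def by simp

lemma nth_mix[simp]: "i < length X \<Longrightarrow> mix X Y S ! i = (if i \<in> S then Y!i else X!i)"
  unfolding mix_def by simp

lemma ternary_mix: "ternary k X \<Longrightarrow> ternary k Y \<Longrightarrow> ternary k (mix X Y S)"
  unfolding ternary_def by (auto simp: mix_def)

lemma dat_mix: "p \<notin> S \<Longrightarrow> p < length X \<Longrightarrow> length X = length Y \<Longrightarrow> X!p \<noteq> Y!p
   \<Longrightarrow> dat (mix X Y S) (mix X Y (insert p S)) p"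
  unfolding dat_def by auto

lemma adj_simp:
  "e3c_adj r s t (A,B,C,d) (A',B',C',d') \<longleftrightarrow>
     (A,B,C,d) \<in> e3c_vertices r s t \<and> (A',B',C',d') \<in> e3c_vertices r s t \<and> (A,B,C,d) \<noteq> (A',B',C',d') \<and>
        ((A = A' \<and> B = B' \<and> C = C' \<and> d \<noteq> d')
      \<or> (d = 0 \<and> d' = 0 \<and> A = A' \<and> B = B' \<and> differ_one C C')
      \<or> (d = 1 \<and> d' = 1 \<and> A = A' \<and> C = C' \<and> differ_one B B')
      \<or> (d = 2 \<and> d' = 2 \<and> B = B' \<and> C = C' \<and> differ_one A A'))"
  unfolding e3c_adj_def by simp

lemma vert_simp: "(A,B,C,d) \<in> e3c_vertices r s t \<longleftrightarrow> ternary r A \<and> ternary s B \<and> ternary t C \<and> d < 3"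
  unfolding e3c_vertices_def by simp

lemma successively_upt:
  "successively P (map f [a..<b]) \<longleftrightarrow> (\<forall>m. a \<le> m \<longrightarrow> Suc m < b \<longrightarrow> P (f m) (f (Suc m)))"
proof -
  have "successively P (map f [a..<b]) \<longleftrightarrow> (\<forall>i. Suc i < b - a \<longrightarrow> P (f (a+i)) (f (Suc (a+i))))"
    unfolding successively_conv_nth by auto
  also have "\<dots> \<longleftrightarrow> (\<forall>m. a \<le> m \<longrightarrow> Suc m < b \<longrightarrow> P (f m) (f (Suc m)))"
    apply safe
     apply (metis Nat.le_imp_diff_is_add add.commute less_diff_conv plus_1_eq_Suc add_Suc_right)
    by auto
  finally show ?thesis .
qed

lemma successively_sandwich:
  assumes "successively P xs" "successively P ys" "a < b" "successively P (map f [a..<b])"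
    "xs \<noteq> [] \<Longrightarrow> P (last xs) (f a)" "ys \<noteq> [] \<Longrightarrow> P (f (b-1)) (hd ys)"
  shows "successively P (xs @ map f [a..<b] @ ys)"
proof -
  have h1: "hd (map f [a..<b]) = f a" using assms(3) by (simp add: upt_conv_Cons)
  have h2: "last (map f [a..<b]) = f (b-1)" using assms(3) by (simp add: last_map)
  show ?thesis using assms h1 h2 by (auto simp: successively_append_iff)
qed

lemma path_intro:
  assumes "u \<noteq> v" "u \<notin> set mid" "v \<notin> set mid" "distinct mid"
    "successively (e3c_adj r s t) (u # mid @ [v])"
  shows "e3c_path r s t u v (u # mid @ [v])"
proof -
  have "set (u # mid @ [v]) \<subseteq> e3c_vertices r s t"
  proof
    fix x assume "x \<in> set (u # mid @ [v])"
    then obtain i where i: "i < length (u # mid @ [v])" "(u # mid @ [v]) ! i = x"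
      by (metis in_set_conv_nth)
    show "x \<in> e3c_vertices r s t"
    proof (cases "Suc i < length (u # mid @ [v])")
      case True
      then show ?thesis using successively_nth[OF assms(5) True] i unfolding e3c_adj_def by auto
    next
      case False
      then have "i \<noteq> 0" "Suc (i - 1) < length (u # mid @ [v])" using i by auto
      then show ?thesis using successively_nth[OF assms(5), of "i-1"] i unfolding e3c_adj_def by auto
    qed
  qed
  then show ?thesis using assms unfolding e3c_path_def successively_conv_nth
    by (auto simp: hd_append)
qed

lemma assemble:
  fixes I :: "'i set" and mid :: "'i \<Rightarrow> e3c_vertex list"
  assumes "finite I" "card I = 2*r+2"
   and "\<And>i. i\<in>I \<Longrightarrow> e3c_path r s t u v (u # mid i @ [v]) \<and> length (mid i) \<le> r+5"
   and "\<And>i j. i\<in>I \<Longrightarrow> j\<in>I \<Longrightarrow> i\<noteq>j \<Longrightarrow> set (mid i) \<inter> set (mid j) = {}"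
   and "\<And>i j. i\<in>I \<Longrightarrow> j\<in>I \<Longrightarrow> mid i = [] \<Longrightarrow> mid j = [] \<Longrightarrow> i = j"
  shows "\<exists>P. card P = 2*r+2 \<and> finite P \<and> (\<forall>p\<in>P. e3c_path r s t u v p \<and> path_len p \<le> r+6) \<and>
          (\<forall>p\<in>P. \<forall>q\<in>P. p\<noteq>q \<longrightarrow> set p \<inter> set q = {u,v})"
proof -
  define g where "g i = u # mid i @ [v]" for i
  have inj: "inj_on g I"
  proof
    fix i j assume ij: "i \<in> I" "j \<in> I" "g i = g j"
    then have m: "mid i = mid j" unfolding g_def by simp
    show "i = j"
    proof (rule ccontr)
      assume "i \<noteq> j"
      then have "set (mid i) = {}" using assms(4)[OF ij(1,2)] m by auto
      then show False using assms(5)[OF ij(1,2)] m \<open>i \<noteq> j\<close> by auto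
    qed
  qed
  show ?thesis
  proof (intro exI conjI ballI impI)
    show "card (g ` I) = 2*r+2" using card_image[OF inj] assms(2) by simp
    show "finite (g ` I)" using assms(1) by simp
  next
    fix p assume "p \<in> g ` I"
    then obtain i where "i \<in> I" "p = g i" by auto
    then show "e3c_path r s t u v p" "path_len p \<le> r + 6" using assms(3)[of i]
      unfolding g_def path_len_def by auto
  next
    fix p q assume "p \<in> g ` I" "q \<in> g ` I" "p \<noteq> q"
    then obtain i j where "i \<in> I" "p = g i" "j \<in> I" "q = g j" "i \<noteq> j" by auto
    then show "set p \<inter> set q = {u, v}" using assms(4)[of i j] unfolding g_def by auto
  qed
qed



lemma mod_inj_gen: "(l::nat) < h \<Longrightarrow> m < h \<Longrightarrow> (k+l) mod h = (k+m) mod h \<Longrightarrow> l = m"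
proof -
  have key: "l \<le> m \<Longrightarrow> m < h \<Longrightarrow> (k+l) mod h = (k+m) mod h \<Longrightarrow> l = m" for l m :: nat
  proof -
    assume a: "l \<le> m" "m < h" "(k+l) mod h = (k+m) mod h"
    then have "h dvd (k+m) - (k+l)" using mod_eq_dvd_iff_nat[of "k+l" "k+m" h] by simp
    then have "h dvd m - l" by simp
    then show "l = m" using a by (metis diff_less_mono2 diff_zero dvd_imp_le le_antisym less_or_eq_imp_le not_less zero_less_diff diff_le_self less_le_trans)
  qed
  assume "l < h" "m < h" "(k+l) mod h = (k+m) mod h"
  then show ?thesis using key[of l m] key[of m l] by (cases "l \<le> m") auto
qed


lemma differ_one_sym: "differ_one X Y \<Longrightarrow> differ_one Y X"
proof -
  assume a: "differ_one X Y"
  have "{i. i < length Y \<and> Y ! i \<noteq> X ! i} = {i. i < length X \<and> X ! i \<noteq> Y ! i}"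
    using a unfolding differ_one_def by auto
  then show ?thesis using a unfolding differ_one_def by (metis (no_types, lifting))
qed

definition bump :: "nat list \<Rightarrow> nat list" where "bump X = X[0 := (X!0 + 1) mod 3]"

lemma bump: assumes "ternary k X" "1 \<le> k"
  shows "differ_one X (bump X)" "ternary k (bump X)" "bump X \<noteq> X" "differ_one (bump X) X"
proof -
  have l: "0 < length X" using assms unfolding ternary_def by auto
  have "X!0 < 3" using assms l unfolding ternary_def by auto
  then have ne: "(X!0 + 1) mod 3 \<noteq> X!0" by presburger
  have d: "dat X (bump X) 0" unfolding bump_def using dat_single[OF l ne] .
  show "differ_one X (bump X)" using dat_differ_one[OF d] .
  then show "bump X \<noteq> X" using differ_one_neq by metis
  show "ternary k (bump X)" unfolding bump_def using ternary_upd assms by simp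
  show "differ_one (bump X) X" using \<open>differ_one X (bump X)\<close> differ_one_sym by blast
qed


datatype pidx = IP nat | IM nat nat | IE0 | IE1

lemma disj_by: "(\<And>X Y Z e. (X,Y,Z,e) \<in> set xs \<Longrightarrow> (X,Y,Z,e) \<in> set ys \<Longrightarrow> False) \<Longrightarrow> set xs \<inter> set ys = ({}::e3c_vertex set)"
  by auto

lemma card3: "(a::nat) < 3 \<Longrightarrow> b < 3 \<Longrightarrow> card {x::nat. x<3 \<and> x\<noteq>a \<and> x\<noteq>b} = (if a=b then 2 else 1)"
proof -
  assume ab: "a < 3" "b < 3"
  have "{x::nat. x<3 \<and> x\<noteq>a \<and> x\<noteq>b} = {0,1,2} - {a,b}" by auto
  moreover have "card ({0::nat,1,2} - {a,b}) = 3 - card {a,b}"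
    using ab by (subst card_Diff_subset) auto
  ultimately show ?thesis by simp
qed

lemma bumpj:
  assumes "ternary t C" "j < t" "e \<in> {1,2::nat}"
  shows "differ_one C (C[j := (C!j + e) mod 3])" "ternary t (C[j := (C!j + e) mod 3])"
proof -
  have l: "j < length C" using assms unfolding ternary_def by auto
  have "C!j < 3" using assms l unfolding ternary_def by auto
  then have ne: "(C!j + e) mod 3 \<noteq> C!j" using assms(3) by auto presburger+
  show "differ_one C (C[j := (C!j + e) mod 3])" using dat_differ_one[OF dat_single[OF l ne]] .
  show "ternary t (C[j := (C!j + e) mod 3])" using ternary_upd assms by simp
qed

lemma bumpj_inj:
  assumes "ternary t C" "j < t" "e \<in> {1,2::nat}" "j' < t" "e' \<in> {1,2::nat}"
    "C[j := (C!j + e) mod 3] = C[j' := (C!j' + e') mod 3]"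
  shows "j = j' \<and> e = e'"
proof -
  have l: "j < length C" "j' < length C" using assms unfolding ternary_def by auto
  have ne: "(C!j + e) mod 3 \<noteq> C!j" using differ_one_neq bumpj[OF assms(1-3)] l(1)
    by (metis list_update_id)
  show ?thesis
  proof (cases "j = j'")
    case True
    then have "(C!j + e) mod 3 = (C!j + e') mod 3" using assms(6) l
      by (metis nth_list_update_eq)
    then have "e = e'" using mod_inj_gen[of e 3 e' "C!j"] assms(3,5) by auto
    then show ?thesis using True by simp
  next
    case False
    then have "C[j := (C!j + e) mod 3] ! j = C ! j" using assms(6) by simp
    then show ?thesis using l ne by simp
  qed
qed

locale ab =
  fixes r :: nat and A A' :: "nat list"
  assumes tA: "ternary r A" and tA': "ternary r A'" and neq: "A \<noteq> A'"
begin

definition ds where "ds = filter (\<lambda>i. A!i \<noteq> A'!i) [0..<r]"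
definition h where "h = length ds"
definition F where "F k m = (\<lambda>l. ds ! ((k+l) mod h)) ` {..<m}"
definition W where "W k m = mix A A' (F k m)"

lemma lenA: "length A = r" "length A' = r"
  using tA tA' unfolding ternary_def by auto

lemma ds_distinct: "distinct ds" unfolding ds_def by simp

lemma set_ds: "set ds = {i. i<r \<and> A!i \<noteq> A'!i}" unfolding ds_def by auto

lemma h_pos: "0 < h"
proof -
  obtain i where "i < r" "A!i \<noteq> A'!i" using neq lenA by (metis nth_equalityI)
  then have "i \<in> set ds" using set_ds by auto
  then show ?thesis unfolding h_def by (cases ds) auto
qed

lemma h_le: "h \<le> r" unfolding h_def ds_def
  by (metis diff_zero length_filter_le length_upt)

lemma ds_nth: "i < h \<Longrightarrow> ds!i < r \<and> A!(ds!i) \<noteq> A'!(ds!i)"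
  using nth_mem[of i ds] set_ds unfolding h_def by auto

lemma mod_inj: "l < h \<Longrightarrow> m < h \<Longrightarrow> (k+l) mod h = (k+m) mod h \<Longrightarrow> l = m"
  using mod_inj_gen by blast

lemma modlt: "(x::nat) mod h < h" using h_pos by simp

lemma dsmod: "ds!((k+l) mod h) \<in> set ds"
  using modlt h_def by simp

lemma F_sub: "F k m \<subseteq> set ds" unfolding F_def using dsmod by auto

lemma F_0: "F k 0 = {}" unfolding F_def by simp

lemma F_Suc: "F k (Suc m) = insert (ds!((k+m) mod h)) (F k m)"
  unfolding F_def by (auto simp: lessThan_Suc)

lemma ds_eq: "ds!((k+l) mod h) = ds!((k+m) mod h) \<Longrightarrow> (k+l) mod h = (k+m) mod h"
  using nth_eq_iff_index_eq[OF ds_distinct] modlt h_def by metis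

lemma F_notin: "m < h \<Longrightarrow> ds!((k+m) mod h) \<notin> F k m"
proof
  assume "m < h" "ds!((k+m) mod h) \<in> F k m"
  then obtain l where "l < m" "ds!((k+l) mod h) = ds!((k+m) mod h)" unfolding F_def by auto
  then show False using ds_eq mod_inj \<open>m < h\<close> by (metis less_trans nat_neq_iff)
qed

lemma card_F: "m \<le> h \<Longrightarrow> card (F k m) = m"
proof (induction m)
  case 0 then show ?case by (simp add: F_0)
next
  case (Suc m)
  then show ?case using F_Suc[of k m] F_notin[of m k] F_def by simp
qed

lemma F_h: "F k h = set ds"
  using card_F[of h k] F_sub[of k h] distinct_card[OF ds_distinct] h_def
  by (metis card_subset_eq finite_set order_refl)

lemma mix_inj: "S \<subseteq> set ds \<Longrightarrow> S' \<subseteq> set ds \<Longrightarrow> mix A A' S = mix A A' S' \<Longrightarrow> S = S'"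
proof -
  assume a: "S \<subseteq> set ds" "S' \<subseteq> set ds" "mix A A' S = mix A A' S'"
  { fix i assume "i \<in> set ds"
    then have i: "i < r" "A!i \<noteq> A'!i" using set_ds by auto
    have "mix A A' S ! i = mix A A' S' ! i" using a by simp
    then have "i \<in> S \<longleftrightarrow> i \<in> S'" using i lenA by (auto split: if_splits) }
  then show "S = S'" using a(1,2) by blast
qed

lemma mix_all: "mix A A' (set ds) = A'"
  by (rule nth_equalityI) (auto simp: lenA set_ds)

lemma mix_empty: "mix A A' {} = A"
  by (rule nth_equalityI) (auto simp: lenA)

lemma W_0: "W k 0 = A" unfolding W_def F_0 mix_empty ..
lemma W_h: "W k h = A'" unfolding W_def F_h mix_all ..

lemma W_dat: "m < h \<Longrightarrow> dat (W k m) (W k (Suc m)) (ds!((k+m) mod h))"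
  unfolding W_def F_Suc
  apply (rule dat_mix)
  using F_notin dsmod set_ds lenA by auto

lemma W_inj: "m \<le> h \<Longrightarrow> m' \<le> h \<Longrightarrow> W k m = W k m' \<Longrightarrow> m = m'"
  unfolding W_def using mix_inj F_sub card_F by metis

lemma W_tern: "ternary r (W k m)" unfolding W_def using ternary_mix tA tA' by blast

lemma W_len[simp]: "length (W k m) = r" unfolding W_def using lenA by simp

lemma W_nth: "i < r \<Longrightarrow> W k m ! i = (if i \<in> F k m then A'!i else A!i)"
  unfolding W_def using lenA by simp

lemma cyc:
  assumes "k < h" "k' < h" "0 < m" "m < h" "0 < m'" "m' < h" "F k m = F k' m'"
  shows "k = k'"
proof -
  define I where "I k m = (\<lambda>l. (k+l) mod h) ` {..<m}" for k m
  have FI: "F k m = (nth ds) ` I k m" for k m unfolding F_def I_def by auto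
  have Isub: "I k m \<subseteq> {..<h}" for k m unfolding I_def using modlt by auto
  have inj: "inj_on (nth ds) {..<h}" using inj_on_nth[OF ds_distinct] h_def by auto
  have II: "I k m = I k' m'"
    using assms(7) FI inj Isub by (metis inj_on_image_eq_iff)
  have f1: "(k+(h-1)) mod h \<notin> I k m" if "m < h" for k m
  proof
    assume "(k+(h-1)) mod h \<in> I k m"
    then obtain l where "l < m" "(k+l) mod h = (k+(h-1)) mod h" unfolding I_def by auto
    then show False using mod_inj[of l "h-1" k] that h_pos by auto
  qed
  have "k' \<in> I k' m'" unfolding I_def using assms(2,5) by (auto intro!: image_eqI[of _ _ 0])
  then have "k' \<in> I k m" using II by simp
  then obtain l where l: "l < m" "k' = (k+l) mod h" unfolding I_def by auto
  show "k = k'"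
  proof (cases l)
    case 0 then show ?thesis using l assms(1) by simp
  next
    case (Suc l')
    have "(k'+(h-1)) mod h = (k+l') mod h"
    proof -
      have "(k'+(h-1)) mod h = (k+l+(h-1)) mod h" using l(2) by (simp add: mod_add_left_eq)
      also have "k+l+(h-1) = (k+l') + 1*h" using Suc h_pos by simp
      finally show ?thesis by (metis mod_mult_self1)
    qed
    moreover have "(k+l') mod h \<in> I k m" unfolding I_def using l Suc by auto
    ultimately show ?thesis using f1[of m' k'] assms(6) II by simp
  qed
qed

definition tb :: "nat \<Rightarrow> nat list \<Rightarrow> nat list \<Rightarrow> nat \<Rightarrow> e3c_vertex list" where "tb k B' C' a = map (\<lambda>m. (W k m, B', C', 2::nat)) [a..<Suc h]"

lemma tb_chain: "ternary s B' \<Longrightarrow> ternary t C' \<Longrightarrow> successively (e3c_adj r s t) (tb k B' C' a)"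
  unfolding tb_def successively_upt
proof (intro allI impI)
  fix m assume "ternary s B'" "ternary t C'" "a \<le> m" "Suc m < Suc h"
  then have "dat (W k m) (W k (Suc m)) (ds!((k+m) mod h))" using W_dat by simp
  then have "differ_one (W k m) (W k (Suc m))" by (rule dat_differ_one)
  then show "e3c_adj r s t (W k m, B', C', 2) (W k (Suc m), B', C', 2)"
    using \<open>ternary s B'\<close> \<open>ternary t C'\<close> W_tern differ_one_neq
    by (simp add: adj_simp vert_simp)
qed

lemma tb_distinct: "distinct (tb k B' C' a)"
  unfolding tb_def distinct_map inj_on_def
  by (simp del: upt_Suc) (meson W_inj atLeastLessThan_iff less_Suc_eq_le)

lemma tb_set: "x \<in> set (tb k B' C' a) \<longleftrightarrow> (\<exists>m. a \<le> m \<and> m \<le> h \<and> x = (W k m, B', C', 2))"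
  unfolding tb_def by auto

lemma tb_ne: "a \<le> h \<Longrightarrow> tb k B' C' a \<noteq> []" unfolding tb_def by simp

lemma tb_hd: "a \<le> h \<Longrightarrow> hd (tb k B' C' a) = (W k a, B', C', 2)"
  unfolding tb_def by (simp add: upt_conv_Cons del: upt_Suc)

lemma tb_last: "a \<le> h \<Longrightarrow> last (tb k B' C' a) = (A', B', C', 2)"
  unfolding tb_def using W_h by (simp add: last_map del: upt_Suc)

lemma tb_len: "a \<le> h \<Longrightarrow> length (tb k B' C' a) = Suc h - a"
  unfolding tb_def by simp

lemma tb_path: "ternary s B' \<Longrightarrow> ternary t C' \<Longrightarrow>
   e3c_path r s t (A,B',C',2) (A',B',C',2) (tb k B' C' 0)"
proof -
  assume a: "ternary s B'" "ternary t C'"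
  have "set (tb k B' C' 0) \<subseteq> e3c_vertices r s t"
    using a W_tern by (auto simp: tb_set vert_simp)
  moreover have "hd (tb k B' C' 0) = (A, B', C', 2)" using tb_hd[of 0 k B' C'] W_0 by simp
  moreover have "last (tb k B' C' 0) = (A', B', C', 2)" using tb_last[of 0 k B' C'] by simp
  ultimately show ?thesis using tb_chain[OF a] tb_distinct tb_ne[of 0 k B' C']
    unfolding e3c_path_def successively_conv_nth[symmetric] by simp
qed

lemma sandwich:
  assumes "successively P xs" "successively P ys" "a \<le> h" "successively P (tb k B' C' a)"
    "xs \<noteq> []" "P (last xs) (W k a, B', C', 2)" "ys \<noteq> []" "P (A', B', C', 2) (hd ys)"
  shows "successively P (xs @ tb k B' C' a @ ys)"
  using assms by (simp add: successively_append_iff tb_hd tb_last tb_ne)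


definition midE1 where "midE1 B C = [(A,B,C,1),(A,bump B,C,1)] @ tb 0 (bump B) C 0 @ [(A',bump B,C,1),(A',B,C,1)]"
definition midE0 where "midE0 B C = [(A,B,C,0),(A,B,bump C,0)] @ tb 0 B (bump C) 0 @ [(A',B,bump C,0),(A',B,C,0)]"
definition midR0 where "midR0 B C' = [(A,B,C',0)] @ tb 0 B C' 0 @ [(A',B,C',0)]"
definition midR1 where "midR1 B' C = [(A,B',C,1)] @ tb 0 B' C 0 @ [(A',B',C,1)]"

lemma E1_path:
  assumes "ternary s B" "ternary t C" "1 \<le> s" "d < 3" "d \<noteq> 1"
  shows "e3c_path r s t (A,B,C,d) (A',B,C,d) ((A,B,C,d) # midE1 B C @ [(A',B,C,d)])"
    "length (midE1 B C) = h + 5"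
proof -
  note b = bump[OF assms(1,3)]
  show "length (midE1 B C) = h + 5" unfolding midE1_def using tb_len[of 0] by simp
  have ch: "successively (e3c_adj r s t) ([(A,B,C,d),(A,B,C,1),(A,bump B,C,1)] @ tb 0 (bump B) C 0 @
      [(A',bump B,C,1),(A',B,C,1),(A',B,C,d)])"
    apply (rule sandwich)
    using assms b tA tA' W_0 tb_chain neq by (auto simp: adj_simp vert_simp)
  show "e3c_path r s t (A,B,C,d) (A',B,C,d) ((A,B,C,d) # midE1 B C @ [(A',B,C,d)])"
    apply (rule path_intro)
    using assms b neq ch tb_distinct unfolding midE1_def by (auto simp: tb_set)
qed

lemma E0_path:
  assumes "ternary s B" "ternary t C" "1 \<le> t" "d < 3" "d \<noteq> 0"
  shows "e3c_path r s t (A,B,C,d) (A',B,C,d) ((A,B,C,d) # midE0 B C @ [(A',B,C,d)])"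
    "length (midE0 B C) = h + 5"
proof -
  note b = bump[OF assms(2,3)]
  show "length (midE0 B C) = h + 5" unfolding midE0_def using tb_len[of 0] by simp
  have ch: "successively (e3c_adj r s t) ([(A,B,C,d),(A,B,C,0),(A,B,bump C,0)] @ tb 0 B (bump C) 0 @
      [(A',B,bump C,0),(A',B,C,0),(A',B,C,d)])"
    apply (rule sandwich)
    using assms b tA tA' W_0 tb_chain neq by (auto simp: adj_simp vert_simp)
  show "e3c_path r s t (A,B,C,d) (A',B,C,d) ((A,B,C,d) # midE0 B C @ [(A',B,C,d)])"
    apply (rule path_intro)
    using assms b neq ch tb_distinct unfolding midE0_def by (auto simp: tb_set)
qed

lemma R0_path:
  assumes "ternary s B" "ternary t C" "ternary t C'" "differ_one C C'"
  shows "e3c_path r s t (A,B,C,0) (A',B,C,0) ((A,B,C,0) # midR0 B C' @ [(A',B,C,0)])"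
    "length (midR0 B C') = h + 3"
proof -
  have b: "C' \<noteq> C" "differ_one C' C" using assms(4) differ_one_neq differ_one_sym by metis+
  show "length (midR0 B C') = h + 3" unfolding midR0_def using tb_len[of 0] by simp
  have ch: "successively (e3c_adj r s t) ([(A,B,C,0),(A,B,C',0)] @ tb 0 B C' 0 @
      [(A',B,C',0),(A',B,C,0)])"
    apply (rule sandwich)
    using assms b tA tA' W_0 tb_chain neq by (auto simp: adj_simp vert_simp)
  show "e3c_path r s t (A,B,C,0) (A',B,C,0) ((A,B,C,0) # midR0 B C' @ [(A',B,C,0)])"
    apply (rule path_intro)
    using assms b neq ch tb_distinct unfolding midR0_def by (auto simp: tb_set)
qed

lemma R1_path:
  assumes "ternary s B" "ternary t C" "ternary s B'" "differ_one B B'"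
  shows "e3c_path r s t (A,B,C,1) (A',B,C,1) ((A,B,C,1) # midR1 B' C @ [(A',B,C,1)])"
    "length (midR1 B' C) = h + 3"
proof -
  have b: "B' \<noteq> B" "differ_one B' B" using assms(4) differ_one_neq differ_one_sym by metis+
  show "length (midR1 B' C) = h + 3" unfolding midR1_def using tb_len[of 0] by simp
  have ch: "successively (e3c_adj r s t) ([(A,B,C,1),(A,B',C,1)] @ tb 0 B' C 0 @
      [(A',B',C,1),(A',B,C,1)])"
    apply (rule sandwich)
    using assms b tA tA' W_0 tb_chain neq by (auto simp: adj_simp vert_simp)
  show "e3c_path r s t (A,B,C,1) (A',B,C,1) ((A,B,C,1) # midR1 B' C @ [(A',B,C,1)])"
    apply (rule path_intro)
    using assms b neq ch tb_distinct unfolding midR1_def by (auto simp: tb_set)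
qed

lemma T_path:
  assumes "ternary s B" "ternary t C" "d < 3" "d \<noteq> 2"
  shows "e3c_path r s t (A,B,C,d) (A',B,C,d) ((A,B,C,d) # tb 0 B C 0 @ [(A',B,C,d)])"
    "length (tb 0 B C 0) = h + 1"
proof -
  show "length (tb 0 B C 0) = h + 1" using tb_len[of 0] by simp
  have ch: "successively (e3c_adj r s t) ([(A,B,C,d)] @ tb 0 B C 0 @ [(A',B,C,d)])"
    apply (rule sandwich)
    using assms tA tA' W_0 tb_chain neq by (auto simp: adj_simp vert_simp)
  show "e3c_path r s t (A,B,C,d) (A',B,C,d) ((A,B,C,d) # tb 0 B C 0 @ [(A',B,C,d)])"
    apply (rule path_intro)
    using assms neq ch tb_distinct by (auto simp: tb_set)
qed

definition midP :: "nat \<Rightarrow> nat list \<Rightarrow> nat list \<Rightarrow> e3c_vertex list" where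
  "midP k B C = map (\<lambda>m. (W k m, B, C, 2)) [1..<h]"

lemma P_path:
  assumes "ternary s B" "ternary t C"
  shows "e3c_path r s t (A,B,C,2) (A',B,C,2) ((A,B,C,2) # midP k B C @ [(A',B,C,2)])"
    "length (midP k B C) \<le> r + 5"
proof -
  have "[1..<Suc h] = [1..<h] @ [h]" using h_pos by simp
  moreover have "[0..<Suc h] = 0 # [1..<Suc h]" by (simp add: upt_conv_Cons del: upt_Suc)
  ultimately have "[0..<Suc h] = 0 # [1..<h] @ [h]" by simp
  then have "tb k B C 0 = (A,B,C,2) # midP k B C @ [(A',B,C,2)]"
    unfolding tb_def midP_def using W_0 W_h by simp
  then show "e3c_path r s t (A,B,C,2) (A',B,C,2) ((A,B,C,2) # midP k B C @ [(A',B,C,2)])"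
    using tb_path[OF assms] by metis
  show "length (midP k B C) \<le> r + 5" unfolding midP_def using h_le by simp
qed

lemma midP_set: "y \<in> set (midP k B C) \<longleftrightarrow> (\<exists>m. 1 \<le> m \<and> m < h \<and> y = (W k m, B, C, 2))"
  unfolding midP_def by auto

definition idx where "idx j = (THE k. k < h \<and> ds!k = j)"
definition kj where "kj j = (if j \<in> set ds then idx j else 0)"
definition m0 :: "nat \<Rightarrow> nat" where "m0 j = (if j \<in> set ds then 1 else 0)"
definition Mv where "Mv j x m = (W (kj j) m)[j := x]"
definition midM :: "nat \<Rightarrow> nat \<Rightarrow> nat list \<Rightarrow> nat list \<Rightarrow> e3c_vertex list" where
  "midM j x B C = map (\<lambda>m. (Mv j x m, B, C, 2)) [m0 j..<Suc h]"

lemma idx_prop: "j \<in> set ds \<Longrightarrow> idx j < h \<and> ds!(idx j) = j"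
  unfolding idx_def h_def using distinct_Ex1[OF ds_distinct] by (rule theI') 

lemma m0_le: "m0 j \<le> 1" unfolding m0_def by simp

lemma F_kj: "j \<in> set ds \<Longrightarrow> 1 \<le> m \<Longrightarrow> j \<in> F (kj j) m"
proof -
  assume a: "j \<in> set ds" "1 \<le> m"
  then have "ds!((idx j + 0) mod h) = j" using idx_prop by simp
  then show ?thesis unfolding F_def kj_def using a by (auto intro!: image_eqI[of _ _ 0])
qed

lemma W_notD: "j \<notin> set ds \<Longrightarrow> j < r \<Longrightarrow> W k m ! j = A!j"
  using W_nth F_sub set_ds by auto

lemma W_cases: "i < r \<Longrightarrow> W k m ! i = A!i \<or> W k m ! i = A'!i"
  using W_nth by auto

lemma Mv_j: "j < r \<Longrightarrow> Mv j x m ! j = x" unfolding Mv_def by simp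

lemma Mv_other: "i \<noteq> j \<Longrightarrow> Mv j x m ! i = W (kj j) m ! i" unfolding Mv_def by simp

lemma Mv_dat:
  assumes "j < r" "m0 j \<le> m" "m < h"
  shows "dat (Mv j x m) (Mv j x (Suc m)) (ds!((kj j+m) mod h))"
proof -
  have "ds!((kj j+m) mod h) \<noteq> j"
  proof (cases "j \<in> set ds")
    case True
    then have "m \<noteq> 0" "kj j < h" "ds!((kj j + 0) mod h) = j" using assms idx_prop unfolding m0_def kj_def by auto
    show ?thesis
    proof
      assume "ds!((kj j+m) mod h) = j"
      then have "ds!((kj j+m) mod h) = ds!((kj j + 0) mod h)" using \<open>ds!((kj j + 0) mod h) = j\<close> by simp
      then have "(kj j+m) mod h = (kj j + 0) mod h" by (rule ds_eq)
      then have "m = 0" using mod_inj[of m 0 "kj j"] assms(3) h_pos by simp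
      then show False using \<open>m \<noteq> 0\<close> by simp
    qed
  next
    case False
    then show ?thesis using dsmod by metis
  qed
  then show ?thesis unfolding Mv_def using dat_upd W_dat assms(3) by metis
qed

lemma Mv_inj:
  assumes "j < r" "m0 j \<le> m" "m \<le> h" "m0 j \<le> m'" "m' \<le> h" "Mv j x m = Mv j x m'"
  shows "m = m'"
proof -
  have "W (kj j) m ! j = W (kj j) m' ! j"
  proof (cases "j \<in> set ds")
    case True
    then have "j \<in> F (kj j) m" "j \<in> F (kj j) m'" using F_kj assms unfolding m0_def by auto
    then show ?thesis using W_nth assms by simp
  next
    case False
    then show ?thesis using W_notD assms by simp
  qed
  then have "W (kj j) m = W (kj j) m'" using upd_inj[OF assms(6)[unfolded Mv_def]] by blast
  then show ?thesis by (rule W_inj[OF assms(3,5)])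
qed

lemma Mv_first: assumes "j < r" shows "Mv j x (m0 j) = A[j:=x]"
proof (cases "j \<in> set ds")
  case True
  have "F (kj j) 1 = {ds!(kj j mod h)}" unfolding F_def by (simp add: lessThan_Suc)
  then have "F (kj j) 1 = {j}" using idx_prop[OF True] unfolding kj_def using True by simp
  then show ?thesis unfolding Mv_def m0_def W_def using True assms
    by (intro nth_equalityI) (auto simp: lenA nth_list_update)
next
  case False
  then show ?thesis unfolding Mv_def m0_def using W_0 by simp
qed

lemma Mv_last: "Mv j x h = A'[j:=x]" unfolding Mv_def using W_h by simp

lemma Mv_tern: "x < 3 \<Longrightarrow> ternary r (Mv j x m)" unfolding Mv_def using W_tern ternary_upd by blast

lemma midM_set: "y \<in> set (midM j x B C) \<longleftrightarrow> (\<exists>m. m0 j \<le> m \<and> m \<le> h \<and> y = (Mv j x m, B, C, 2))"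
  unfolding midM_def by auto

lemma M_path:
  assumes "ternary s B" "ternary t C" "j < r" "x < 3" "x \<noteq> A!j" "x \<noteq> A'!j"
  shows "e3c_path r s t (A,B,C,2) (A',B,C,2) ((A,B,C,2) # midM j x B C @ [(A',B,C,2)])"
    "length (midM j x B C) \<le> r + 5"
proof -
  show "length (midM j x B C) \<le> r + 5" unfolding midM_def using h_le by (simp; arith)
  have mh: "m0 j \<le> h" using m0_le[of j] h_pos by linarith
  have ne: "midM j x B C \<noteq> []" unfolding midM_def using mh by simp
  have hd: "hd (midM j x B C) = (A[j:=x], B, C, 2)" unfolding midM_def using mh Mv_first[OF assms(3)]
    by (simp add: upt_conv_Cons del: upt_Suc)
  have lst: "last (midM j x B C) = (A'[j:=x], B, C, 2)" unfolding midM_def using Mv_last mh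
    by (simp add: last_map del: upt_Suc)
  have ch: "successively (e3c_adj r s t) (midM j x B C)"
    unfolding midM_def successively_upt
  proof (intro allI impI)
    fix m assume "m0 j \<le> m" "Suc m < Suc h"
    then have "differ_one (Mv j x m) (Mv j x (Suc m))" using Mv_dat[OF assms(3), of m x] dat_differ_one by simp
    then show "e3c_adj r s t (Mv j x m, B, C, 2) (Mv j x (Suc m), B, C, 2)"
      using assms Mv_tern differ_one_neq by (simp add: adj_simp vert_simp)
  qed
  have d1: "differ_one A (A[j:=x])" using dat_single[of j A x] assms lenA dat_differ_one by simp
  have d2: "differ_one (A'[j:=x]) A'" using dat_single[of j A' x] assms lenA dat_differ_one differ_one_sym by simp
  have t1: "ternary r (A[j:=x])" "ternary r (A'[j:=x])" using ternary_upd tA tA' assms by auto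
  have ch2: "successively (e3c_adj r s t) ([(A,B,C,2)] @ midM j x B C @ [(A',B,C,2)])"
    using ch ne hd lst d1 d2 t1 differ_one_neq[OF d1] differ_one_neq[OF d2] assms tA tA'
    by (simp add: successively_append_iff successively_Cons adj_simp vert_simp hd_append)
  have notin1: "(A,B,C,2) \<notin> set (midM j x B C)"
  proof
    assume "(A,B,C,2) \<in> set (midM j x B C)"
    then obtain m where "A = Mv j x m" unfolding midM_set by auto
    then show False using Mv_j[OF assms(3), of x m] assms(5) by simp
  qed
  have notin2: "(A',B,C,2) \<notin> set (midM j x B C)"
  proof
    assume "(A',B,C,2) \<in> set (midM j x B C)"
    then obtain m where "A' = Mv j x m" unfolding midM_set by auto
    then show False using Mv_j[OF assms(3), of x m] assms(6) by simp
  qed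
  note notin = notin1 notin2
  have dist: "distinct (midM j x B C)" unfolding midM_def distinct_map inj_on_def
    using Mv_inj[OF assms(3)] by (simp del: upt_Suc)
  show "e3c_path r s t (A,B,C,2) (A',B,C,2) ((A,B,C,2) # midM j x B C @ [(A',B,C,2)])"
    apply (rule path_intro) using neq notin dist ch2 by simp_all
qed

lemma E0_char: "(X,Y,Z,e) \<in> set (midE0 B C) \<Longrightarrow> e = 0 \<or> (Y = B \<and> Z = bump C \<and> e = 2)"
  unfolding midE0_def by (auto simp: tb_set)
lemma E1_char: "(X,Y,Z,e) \<in> set (midE1 B C) \<Longrightarrow> e = 1 \<or> (Y = bump B \<and> Z = C \<and> e = 2)"
  unfolding midE1_def by (auto simp: tb_set)
lemma R0_char: "(X,Y,Z,e) \<in> set (midR0 B C') \<Longrightarrow> Y = B \<and> Z = C' \<and> (e = 0 \<or> e = 2)"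
  unfolding midR0_def by (auto simp: tb_set)
lemma R1_char: "(X,Y,Z,e) \<in> set (midR1 B' C) \<Longrightarrow> Y = B' \<and> Z = C \<and> (e = 1 \<or> e = 2)"
  unfolding midR1_def by (auto simp: tb_set)
lemma T_char: "(X,Y,Z,e) \<in> set (tb k B C a) \<Longrightarrow> Y = B \<and> Z = C \<and> e = 2"
  by (auto simp: tb_set)
lemma P_char: "(X,Y,Z,e) \<in> set (midP k B C) \<Longrightarrow> Y = B \<and> Z = C \<and> e = 2 \<and> (\<exists>m. 1 \<le> m \<and> m < h \<and> X = W k m)"
  by (auto simp: midP_set)
lemma M_char: "(X,Y,Z,e) \<in> set (midM j x B C) \<Longrightarrow> Y = B \<and> Z = C \<and> e = 2 \<and> (\<exists>m. X = Mv j x m)"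
  by (auto simp: midM_set)

lemma midE0_ne: "midE0 B C \<noteq> []" unfolding midE0_def by simp
lemma midE1_ne: "midE1 B C \<noteq> []" unfolding midE1_def by simp
lemma midR0_ne: "midR0 B C \<noteq> []" unfolding midR0_def by simp
lemma midR1_ne: "midR1 B C \<noteq> []" unfolding midR1_def by simp
lemma midM_ne: "midM j x B C \<noteq> []" unfolding midM_def using m0_le[of j] h_pos by simp
lemma midP_empty: "midP k B C = [] \<Longrightarrow> h = 1" unfolding midP_def using h_pos by simp

lemma PP_disj:
  assumes "k < h" "k' < h" "k \<noteq> k'"
  shows "set (midP k B C) \<inter> set (midP k' B C) = {}"
proof (rule ccontr)
  assume "set (midP k B C) \<inter> set (midP k' B C) \<noteq> {}"
  then obtain m m' where m: "1 \<le> m" "m < h" "1 \<le> m'" "m' < h" "W k m = W k' m'"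
    by (auto simp: midP_set)
  then have "mix A A' (F k m) = mix A A' (F k' m')" unfolding W_def by simp
  then have "F k m = F k' m'" by (rule mix_inj[OF F_sub F_sub])
  then have "k = k'" using cyc[OF assms(1,2), of m m'] m by simp
  then show False using assms by simp
qed

lemma PM_disj:
  assumes "j < r" "x \<noteq> A!j" "x \<noteq> A'!j"
  shows "set (midP k B C) \<inter> set (midM j x B C) = {}"
proof (rule ccontr)
  assume "set (midP k B C) \<inter> set (midM j x B C) \<noteq> {}"
  then obtain m m' where "W k m = Mv j x m'"
    by (auto simp: midP_set midM_set)
  then have "W k m ! j = x" using Mv_j[OF assms(1)] by simp
  then show False using W_cases[OF assms(1), of k m] assms by auto
qed

lemma MM_disj:
  assumes "j < r" "x \<noteq> A!j" "x \<noteq> A'!j" "j' < r" "x' \<noteq> A!j'" "x' \<noteq> A'!j'" "(j,x) \<noteq> (j',x')"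
  shows "set (midM j x B C) \<inter> set (midM j' x' B C) = {}"
proof (rule ccontr)
  assume "set (midM j x B C) \<inter> set (midM j' x' B C) \<noteq> {}"
  then obtain m m' where e: "Mv j x m = Mv j' x' m'"
    by (auto simp: midM_set)
  show False
  proof (cases "j = j'")
    case True
    have "x = Mv j x m ! j" using Mv_j[OF assms(1)] by simp
    also have "\<dots> = Mv j' x' m' ! j" using e by simp
    also have "\<dots> = x'" using Mv_j[OF assms(1)] True by simp
    finally show False using assms(7) True by simp
  next
    case False
    have "Mv j' x' m' ! j = W (kj j') m' ! j" using False by (simp add: Mv_other)
    moreover have "Mv j x m ! j = x" using Mv_j[OF assms(1)] by simp
    ultimately have "x = W (kj j') m' ! j" using e by simp
    then show False using W_cases[OF assms(1), of "kj j'" m'] assms(2,3) by auto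
  qed
qed

lemma card_J: "card (Sigma {..<r} (\<lambda>j. {x. x<3 \<and> x\<noteq>A!j \<and> x\<noteq>A'!j})) = 2*(r-h) + h"
proof -
  have "card (Sigma {..<r} (\<lambda>j. {x. x<3 \<and> x\<noteq>A!j \<and> x\<noteq>A'!j}))
      = (\<Sum>j<r. card {x. x<3 \<and> x\<noteq>A!j \<and> x\<noteq>A'!j})"
    by (rule card_SigmaI) auto
  also have "\<dots> = (\<Sum>j<r. if A!j = A'!j then 2 else 1)"
    using tA tA' lenA unfolding ternary_def by (intro sum.cong refl card3) auto
  also have "\<dots> = (\<Sum>j\<in>{..<r} \<inter> {j. A!j = A'!j}. 2) + (\<Sum>j\<in>{..<r} \<inter> - {j. A!j = A'!j}. 1)"
    by (rule sum.If_cases) simp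
  also have "{..<r} \<inter> - {j. A!j = A'!j} = set ds" using set_ds by auto
  also have "{..<r} \<inter> {j. A!j = A'!j} = {..<r} - set ds" using set_ds by auto
  finally show ?thesis
    using card_Diff_subset[of "set ds" "{..<r}"] set_ds distinct_card[OF ds_distinct] h_def
    by (simp add: subset_eq)
qed

lemma case2:
  assumes "ternary s B" "ternary t C" "1 \<le> s" "1 \<le> t"
  shows "\<exists>P. card P = 2*r+2 \<and> finite P \<and>
           (\<forall>p\<in>P. e3c_path r s t (A,B,C,2) (A',B,C,2) p \<and> path_len p \<le> r + 6) \<and>
           (\<forall>p\<in>P. \<forall>q\<in>P. p \<noteq> q \<longrightarrow> set p \<inter> set q = {(A,B,C,2), (A',B,C,2)})"
proof -
  define J where "J = Sigma {..<r} (\<lambda>j. {x. x<3 \<and> x\<noteq>A!j \<and> x\<noteq>A'!j})"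
  define I where "I = IP ` {..<h} \<union> (\<lambda>(j,x). IM j x) ` J \<union> {IE0, IE1}"
  define mid where "mid i = (case i of IP k \<Rightarrow> midP k B C | IM j x \<Rightarrow> midM j x B C
       | IE0 \<Rightarrow> midE0 B C | IE1 \<Rightarrow> midE1 B C)" for i
  have bB: "bump B \<noteq> B" "B \<noteq> bump B" and bC: "bump C \<noteq> C" "C \<noteq> bump C"
    using bump(3)[OF assms(1,3)] bump(3)[OF assms(2,4)] by auto
  show ?thesis
  proof (rule assemble[where I = I and mid = mid])
    show "finite I" unfolding I_def J_def by simp
    have c1: "card (IP ` {..<h}) = h" by (subst card_image) (auto simp: inj_on_def)
    have c2: "card ((\<lambda>(j,x). IM j x) ` J) = 2*(r-h) + h"
      using card_J unfolding J_def by (subst card_image) (auto simp: inj_on_def)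
    have f: "finite J" unfolding J_def by simp
    have "card (IP ` {..<h} \<union> (\<lambda>(j,x). IM j x) ` J) = h + (2*(r-h) + h)"
      using c1 c2 f by (subst card_Un_disjoint) auto
    then have "card I = h + (2*(r-h) + h) + 2" unfolding I_def using f
      by (subst card_Un_disjoint) auto
    then show "card I = 2*r+2" using h_le by simp
  next
    fix i assume "i \<in> I"
    then consider (P) k where "i = IP k" "k < h" | (M) j x where "i = IM j x" "(j,x) \<in> J"
      | (E0) "i = IE0" | (E1) "i = IE1" unfolding I_def by auto
    then show "e3c_path r s t (A,B,C,2) (A',B,C,2) ((A,B,C,2) # mid i @ [(A',B,C,2)]) \<and> length (mid i) \<le> r+5"
    proof cases
      case P then show ?thesis unfolding mid_def using P_path assms by simp
    next
      case M then show ?thesis unfolding mid_def J_def using M_path assms by simp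
    next
      case E0 then show ?thesis unfolding mid_def using E0_path[OF assms(1,2,4), of 2] h_le by simp
    next
      case E1 then show ?thesis unfolding mid_def using E1_path[OF assms(1,2,3), of 2] h_le by simp
    qed
  next
    fix i j assume "i \<in> I" "j \<in> I" "mid i = []" "mid j = []"
    then show "i = j" unfolding I_def mid_def
      using midE0_ne midE1_ne midM_ne midP_empty by auto
  next
    fix i i' assume ii: "i \<in> I" "i' \<in> I" "i \<noteq> i'"
    from ii(1) consider (P) k where "i = IP k" "k < h" | (M) j x where "i = IM j x" "(j,x) \<in> J"
      | (E0) "i = IE0" | (E1) "i = IE1" unfolding I_def by auto
    note ci = this
    from ii(2) consider (P) k where "i' = IP k" "k < h" | (M) j x where "i' = IM j x" "(j,x) \<in> J"
      | (E0) "i' = IE0" | (E1) "i' = IE1" unfolding I_def by auto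
    note ci' = this
    show "set (mid i) \<inter> set (mid i') = {}"
    proof (cases rule: ci)
      case (P k)
      then show ?thesis
      proof (cases rule: ci')
        case (P k') then show ?thesis using PP_disj \<open>i = IP k\<close> \<open>k < h\<close> ii(3) unfolding mid_def by auto
      next
        case (M j x) then show ?thesis using PM_disj[of j x k B C] \<open>i = IP k\<close> unfolding mid_def J_def by auto
      next
        case E0 then show ?thesis using \<open>i = IP k\<close> unfolding mid_def
          by (intro disj_by) (auto dest!: P_char E0_char simp: bC)
      next
        case E1 then show ?thesis using \<open>i = IP k\<close> unfolding mid_def
          by (intro disj_by) (auto dest!: P_char E1_char simp: bB)
      qed
    next
      case (M j x)
      then show ?thesis
      proof (cases rule: ci')
        case (P k') then show ?thesis using PM_disj[of j x k' B C] \<open>i = IM j x\<close> \<open>(j,x) \<in> J\<close> unfolding mid_def J_def by auto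
      next
        case (M j' x') then show ?thesis using MM_disj[of j x j' x' B C] \<open>i = IM j x\<close> \<open>(j,x) \<in> J\<close> ii(3)
          unfolding mid_def J_def by auto
      next
        case E0 then show ?thesis using \<open>i = IM j x\<close> unfolding mid_def
          by (intro disj_by) (auto dest!: M_char E0_char simp: bC)
      next
        case E1 then show ?thesis using \<open>i = IM j x\<close> unfolding mid_def
          by (intro disj_by) (auto dest!: M_char E1_char simp: bB)
      qed
    next
      case E0
      then show ?thesis
      proof (cases rule: ci')
        case (P k') then show ?thesis using E0 unfolding mid_def
          by (intro disj_by) (auto dest!: P_char E0_char simp: bC)
      next
        case (M j' x') then show ?thesis using E0 unfolding mid_def
          by (intro disj_by) (auto dest!: M_char E0_char simp: bC)
      next
        case E0 then show ?thesis using \<open>i = IE0\<close> ii(3) by simp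
      next
        case E1 then show ?thesis using \<open>i = IE0\<close> unfolding mid_def
          by (intro disj_by) (auto dest!: E1_char E0_char simp: bB)
      qed
    next
      case E1
      then show ?thesis
      proof (cases rule: ci')
        case (P k') then show ?thesis using E1 unfolding mid_def
          by (intro disj_by) (auto dest!: P_char E1_char simp: bB)
      next
        case (M j' x') then show ?thesis using E1 unfolding mid_def
          by (intro disj_by) (auto dest!: M_char E1_char simp: bB)
      next
        case E0 then show ?thesis using \<open>i = IE1\<close> unfolding mid_def
          by (intro disj_by) (auto dest!: E1_char E0_char simp: bB)
      next
        case E1 then show ?thesis using \<open>i = IE1\<close> ii(3) by simp
      qed
    qed
  qed
qed

lemma case0:
  assumes "ternary s B" "ternary t C" "1 \<le> s" "r \<le> t"
  shows "\<exists>P. card P = 2*r+2 \<and> finite P \<and>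
           (\<forall>p\<in>P. e3c_path r s t (A,B,C,0) (A',B,C,0) p \<and> path_len p \<le> r + 6) \<and>
           (\<forall>p\<in>P. \<forall>q\<in>P. p \<noteq> q \<longrightarrow> set p \<inter> set q = {(A,B,C,0), (A',B,C,0)})"
proof -
  define K where "K = {..<r} \<times> {1,2::nat}"
  define I where "I = {IP 0, IE1} \<union> (\<lambda>(j,e). IM j e) ` K"
  define cc where "cc j e = C[j := (C!j + e) mod 3]" for j e
  define mid where "mid i = (case i of IP k \<Rightarrow> tb 0 B C 0 | IM j e \<Rightarrow> midR0 B (cc j e)
       | IE0 \<Rightarrow> [] | IE1 \<Rightarrow> midE1 B C)" for i
  have bB: "bump B \<noteq> B" "B \<noteq> bump B" using bump(3)[OF assms(1,3)] by auto
  have cc0: "differ_one C (cc j e)" "ternary t (cc j e)" if "(j,e) \<in> K" for j e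
    using bumpj[OF assms(2), of j e] that assms(4) unfolding K_def cc_def by auto
  have cc: "differ_one C (cc j e)" "ternary t (cc j e)" "cc j e \<noteq> C" "C \<noteq> cc j e" if "(j,e) \<in> K" for j e
    using cc0[OF that] differ_one_neq[OF cc0(1)[OF that]] by auto
  have ccinj: "cc j e = cc j' e' \<Longrightarrow> (j,e) \<in> K \<Longrightarrow> (j',e') \<in> K \<Longrightarrow> (j,e) = (j',e')" for j e j' e'
    using bumpj_inj[OF assms(2), of j e j' e'] assms(4) unfolding K_def cc_def by auto
  show ?thesis
  proof (rule assemble[where I = I and mid = mid])
    show "finite I" unfolding I_def K_def by simp
    have c2: "card ((\<lambda>(j,e). IM j e) ` K) = 2*r"
      unfolding K_def by (subst card_image) (auto simp: inj_on_def)
    have "card I = 2 + 2*r" unfolding I_def using c2 K_def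
      by (subst card_Un_disjoint) auto
    then show "card I = 2*r+2" by simp
  next
    fix i assume "i \<in> I"
    then consider (P) "i = IP 0" | (M) j e where "i = IM j e" "(j,e) \<in> K"
      | (E1) "i = IE1" unfolding I_def by auto
    then show "e3c_path r s t (A,B,C,0) (A',B,C,0) ((A,B,C,0) # mid i @ [(A',B,C,0)]) \<and> length (mid i) \<le> r+5"
    proof cases
      case P then show ?thesis unfolding mid_def using T_path[OF assms(1,2), of 0] h_le by simp
    next
      case M then show ?thesis unfolding mid_def using R0_path[OF assms(1,2) cc(2,1)] h_le by simp
    next
      case E1 then show ?thesis unfolding mid_def using E1_path[OF assms(1,2,3), of 0] h_le by simp
    qed
  next
    fix i j assume "i \<in> I" "j \<in> I" "mid i = []" "mid j = []"
    then show "i = j" unfolding I_def mid_def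
      using midE1_ne midR0_ne tb_ne[of 0] by auto
  next
    fix i i' assume ii: "i \<in> I" "i' \<in> I" "i \<noteq> i'"
    from ii(1) consider (P) "i = IP 0" | (M) j e where "i = IM j e" "(j,e) \<in> K"
      | (E1) "i = IE1" unfolding I_def by auto
    note ci = this
    from ii(2) consider (P) "i' = IP 0" | (M) j e where "i' = IM j e" "(j,e) \<in> K"
      | (E1) "i' = IE1" unfolding I_def by auto
    note ci' = this
    show "set (mid i) \<inter> set (mid i') = {}"
    proof (cases rule: ci)
      case P
      then show ?thesis
      proof (cases rule: ci')
        case P then show ?thesis using \<open>i = IP 0\<close> ii(3) by simp
      next
        case (M j e) then show ?thesis using \<open>i = IP 0\<close> cc[OF M(2)] unfolding mid_def
          by (intro disj_by) (auto dest!: T_char R0_char)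
      next
        case E1 then show ?thesis using \<open>i = IP 0\<close> unfolding mid_def
          by (intro disj_by) (auto dest!: T_char E1_char simp: bB)
      qed
    next
      case (M j e)
      then show ?thesis
      proof (cases rule: ci')
        case P then show ?thesis using \<open>i = IM j e\<close> cc[OF \<open>(j,e) \<in> K\<close>] unfolding mid_def
          by (intro disj_by) (auto dest!: T_char R0_char)
      next
        case (M j' e') then show ?thesis using \<open>i = IM j e\<close> \<open>(j,e) \<in> K\<close> ii(3) ccinj[of j e j' e'] unfolding mid_def
          by (intro disj_by) (auto dest!: R0_char)
      next
        case E1 then show ?thesis using \<open>i = IM j e\<close> unfolding mid_def
          by (intro disj_by) (auto dest!: R0_char E1_char simp: bB)
      qed
    next
      case E1
      then show ?thesis
      proof (cases rule: ci')
        case P then show ?thesis using E1 unfolding mid_def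
          by (intro disj_by) (auto dest!: T_char E1_char simp: bB)
      next
        case (M j' e') then show ?thesis using E1 unfolding mid_def
          by (intro disj_by) (auto dest!: R0_char E1_char simp: bB)
      next
        case E1 then show ?thesis using \<open>i = IE1\<close> ii(3) by simp
      qed
    qed
  qed
qed

lemma case1:
  assumes "ternary s B" "ternary t C" "1 \<le> t" "r \<le> s"
  shows "\<exists>P. card P = 2*r+2 \<and> finite P \<and>
           (\<forall>p\<in>P. e3c_path r s t (A,B,C,1) (A',B,C,1) p \<and> path_len p \<le> r + 6) \<and>
           (\<forall>p\<in>P. \<forall>q\<in>P. p \<noteq> q \<longrightarrow> set p \<inter> set q = {(A,B,C,1), (A',B,C,1)})"
proof -
  define K where "K = {..<r} \<times> {1,2::nat}"
  define I where "I = {IP 0, IE0} \<union> (\<lambda>(j,e). IM j e) ` K"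
  define cc where "cc j e = B[j := (B!j + e) mod 3]" for j e
  define mid where "mid i = (case i of IP k \<Rightarrow> tb 0 B C 0 | IM j e \<Rightarrow> midR1 (cc j e) C
       | IE0 \<Rightarrow> midE0 B C | IE1 \<Rightarrow> [])" for i
  have bC: "bump C \<noteq> C" "C \<noteq> bump C" using bump(3)[OF assms(2,3)] by auto
  have cc0: "differ_one B (cc j e)" "ternary s (cc j e)" if "(j,e) \<in> K" for j e
    using bumpj[OF assms(1), of j e] that assms(4) unfolding K_def cc_def by auto
  have cc: "differ_one B (cc j e)" "ternary s (cc j e)" "cc j e \<noteq> B" "B \<noteq> cc j e" if "(j,e) \<in> K" for j e
    using cc0[OF that] differ_one_neq[OF cc0(1)[OF that]] by auto
  have ccinj: "cc j e = cc j' e' \<Longrightarrow> (j,e) \<in> K \<Longrightarrow> (j',e') \<in> K \<Longrightarrow> (j,e) = (j',e')" for j e j' e'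
    using bumpj_inj[OF assms(1), of j e j' e'] assms(4) unfolding K_def cc_def by auto
  show ?thesis
  proof (rule assemble[where I = I and mid = mid])
    show "finite I" unfolding I_def K_def by simp
    have c2: "card ((\<lambda>(j,e). IM j e) ` K) = 2*r"
      unfolding K_def by (subst card_image) (auto simp: inj_on_def)
    have "card I = 2 + 2*r" unfolding I_def using c2 K_def
      by (subst card_Un_disjoint) auto
    then show "card I = 2*r+2" by simp
  next
    fix i assume "i \<in> I"
    then consider (P) "i = IP 0" | (M) j e where "i = IM j e" "(j,e) \<in> K"
      | (E0) "i = IE0" unfolding I_def by auto
    then show "e3c_path r s t (A,B,C,1) (A',B,C,1) ((A,B,C,1) # mid i @ [(A',B,C,1)]) \<and> length (mid i) \<le> r+5"
    proof cases
      case P then show ?thesis unfolding mid_def using T_path[OF assms(1,2), of 1] h_le by simp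
    next
      case M then show ?thesis unfolding mid_def using R1_path[OF assms(1,2) cc(2,1)] h_le by simp
    next
      case E0 then show ?thesis unfolding mid_def using E0_path[OF assms(1,2,3), of 1] h_le by simp
    qed
  next
    fix i j assume "i \<in> I" "j \<in> I" "mid i = []" "mid j = []"
    then show "i = j" unfolding I_def mid_def
      using midE0_ne midR1_ne tb_ne[of 0] by auto
  next
    fix i i' assume ii: "i \<in> I" "i' \<in> I" "i \<noteq> i'"
    from ii(1) consider (P) "i = IP 0" | (M) j e where "i = IM j e" "(j,e) \<in> K"
      | (E0) "i = IE0" unfolding I_def by auto
    note ci = this
    from ii(2) consider (P) "i' = IP 0" | (M) j e where "i' = IM j e" "(j,e) \<in> K"
      | (E0) "i' = IE0" unfolding I_def by auto
    note ci' = this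
    show "set (mid i) \<inter> set (mid i') = {}"
    proof (cases rule: ci)
      case P
      then show ?thesis
      proof (cases rule: ci')
        case P then show ?thesis using \<open>i = IP 0\<close> ii(3) by simp
      next
        case (M j e) then show ?thesis using \<open>i = IP 0\<close> cc[OF M(2)] unfolding mid_def
          by (intro disj_by) (auto dest!: T_char R1_char)
      next
        case E0 then show ?thesis using \<open>i = IP 0\<close> unfolding mid_def
          by (intro disj_by) (auto dest!: T_char E0_char simp: bC)
      qed
    next
      case (M j e)
      then show ?thesis
      proof (cases rule: ci')
        case P then show ?thesis using \<open>i = IM j e\<close> cc[OF \<open>(j,e) \<in> K\<close>] unfolding mid_def
          by (intro disj_by) (auto dest!: T_char R1_char)
      next
        case (M j' e') then show ?thesis using \<open>i = IM j e\<close> \<open>(j,e) \<in> K\<close> ii(3) ccinj[of j e j' e'] unfolding mid_def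
          by (intro disj_by) (auto dest!: R1_char)
      next
        case E0 then show ?thesis using \<open>i = IM j e\<close> unfolding mid_def
          by (intro disj_by) (auto dest!: R1_char E0_char simp: bC)
      qed
    next
      case E0
      then show ?thesis
      proof (cases rule: ci')
        case P then show ?thesis using E0 unfolding mid_def
          by (intro disj_by) (auto dest!: T_char E0_char simp: bC)
      next
        case (M j' e') then show ?thesis using E0 unfolding mid_def
          by (intro disj_by) (auto dest!: R1_char E0_char simp: bC)
      next
        case E0 then show ?thesis using \<open>i = IE0\<close> ii(3) by simp
      qed
    qed
  qed
qed

end

theorem lemma10:
  fixes r s t :: nat and A A' B C :: "nat list" and d :: nat
  assumes "1 \<le> r" and "r \<le> s" and "s \<le> t"
    and "(A,B,C,d) \<in> e3c_vertices r s t" and "(A',B,C,d) \<in> e3c_vertices r s t"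
    and "A \<noteq> A'"
  shows "\<exists>P. card P = 2*r + 2 \<and> finite P \<and>
           (\<forall>p\<in>P. e3c_path r s t (A,B,C,d) (A',B,C,d) p \<and> path_len p \<le> r + 6) \<and>
           (\<forall>p\<in>P. \<forall>q\<in>P. p \<noteq> q \<longrightarrow> set p \<inter> set q = {(A,B,C,d), (A',B,C,d)})"
proof -
  have v: "ternary r A" "ternary r A'" "ternary s B" "ternary t C" "d < 3"
    using assms(4,5) by (auto simp: vert_simp)
  interpret ab r A A' using v(1,2) assms(6) by unfold_locales
  consider "d = 0" | "d = 1" | "d = 2" using v(5) by linarith
  then show ?thesis
  proof cases
    case 1 then show ?thesis using case0[OF v(3,4)] assms(1-3) by simp
  next
    case 2 then show ?thesis using case1[OF v(3,4)] assms(1-3) by simp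
  next
    case 3 then show ?thesis using case2[OF v(3,4)] assms(1-3) by simp
  qed
qed

end
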